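(* Let $K$ be a field of characteristic zero, $x=(x_1,\dots,x_n)$, and let $d\ge 2$. Let $f\in K[x]$ have nonzero terms of degrees $0,1,d$ only, say $f=f^{(0)}+f^{(1)}+f^{(d)}$ with $f^{(k)}$ homogeneous of degree $k$. Suppose that $f$ is reducible and that $\mathcal{J}f=(\partial f/\partial x_1,\dots,\partial f/\partial x_n)$ is unimodular. Then: (a) if $d\le 3$ or $f^{(0)}=0$, then $f$ has a divisor of degree $1$; (b) if $f$ has a divisor of degree $1$, then $f^{(0)}=0$, $f^{(1)}\mid f$ and $(f^{(1)})^2\mid f^{(d)}$.
   Context: A row vector of polynomials in $K[x]$ is unimodular if its entries generate the unit ideal of $K[x]$. *)

theory Defs
  imports "HOL-Library.Poly_Mapping"
begin

text \<open>Multivariate polynomials over 'a in the variables of the finite type 'v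
  (so n = CARD('v)): finitely supported maps from monomials (exponent vectors)
  to coefficients, with the convolution product of Poly_Mapping.\<close>
type_synonym ('v, 'a) mpoly = "('v \<Rightarrow>\<^sub>0 nat) \<Rightarrow>\<^sub>0 'a"

definition mon_deg :: "('v \<Rightarrow>\<^sub>0 nat) \<Rightarrow> nat" where
  "mon_deg m = (\<Sum>i\<in>Poly_Mapping.keys m. Poly_Mapping.lookup m i)"

text \<open>Total degree (0 for the zero polynomial).\<close>
definition total_deg :: "('v, 'a::zero) mpoly \<Rightarrow> nat" where
  "total_deg p = Max (insert 0 (mon_deg ` Poly_Mapping.keys p))"

definition hcomp :: "nat \<Rightarrow> ('v, 'a::zero) mpoly \<Rightarrow> ('v, 'a) mpoly" where
  "hcomp k p = Abs_poly_mapping (\<lambda>m. if mon_deg m = k then Poly_Mapping.lookup p m else 0)"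

definition pdiff :: "'v \<Rightarrow> ('v, 'a::comm_semiring_1) mpoly \<Rightarrow> ('v, 'a) mpoly" where
  "pdiff i p = Abs_poly_mapping
     (\<lambda>m. of_nat (Poly_Mapping.lookup m i + 1) * Poly_Mapping.lookup p (m + Poly_Mapping.single i 1))"

definition jacobian_unimodular :: "('v::finite, 'a::comm_ring_1) mpoly \<Rightarrow> bool" where
  "jacobian_unimodular f \<longleftrightarrow> (\<exists>g. (\<Sum>i\<in>UNIV. g i * pdiff i f) = 1)"

definition reducible :: "('v, 'a::comm_semiring_1) mpoly \<Rightarrow> bool" where
  "reducible p \<longleftrightarrow> (\<exists>g h. p = g * h \<and> total_deg g \<ge> 1 \<and> total_deg h \<ge> 1)"

end

theory Submission
  imports Defs
begin


abbreviation lk where "lk \<equiv> Poly_Mapping.lookup"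
abbreviation ks where "ks \<equiv> Poly_Mapping.keys"

lemma mon_deg_UNIV: "mon_deg (m::'v::finite \<Rightarrow>\<^sub>0 nat) = (\<Sum>i\<in>UNIV. lk m i)"
  unfolding mon_deg_def
  by (rule sum.mono_neutral_left) (auto simp: in_keys_iff)

lemma mon_deg_add: "mon_deg ((m::'v::finite \<Rightarrow>\<^sub>0 nat) + n) = mon_deg m + mon_deg n"
  by (simp add: mon_deg_UNIV lookup_add sum.distrib)

lemma mon_deg_zero[simp]: "mon_deg 0 = 0"
  by (simp add: mon_deg_def)

lemma mon_deg_single[simp]: "mon_deg (Poly_Mapping.single (i::'v::finite) k) = k"
  by (simp add: mon_deg_UNIV lookup_single when_def)

lemma mon_deg_0_iff: "mon_deg (m::'v::finite \<Rightarrow>\<^sub>0 nat) = 0 \<longleftrightarrow> m = 0"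
  by (auto simp: mon_deg_UNIV poly_mapping_eq_iff fun_eq_iff)

lemma mon_deg_1: "mon_deg (m::'v::finite \<Rightarrow>\<^sub>0 nat) = 1 \<Longrightarrow> \<exists>i. m = Poly_Mapping.single i 1"
proof -
  assume a: "mon_deg m = 1"
  then have "ks m \<noteq> {}" by (auto simp: mon_deg_def)
  then obtain i where i: "i \<in> ks m" by blast
  have "lk m i + (\<Sum>j\<in>UNIV-{i}. lk m j) = 1"
    using a by (simp add: mon_deg_UNIV sum.remove[of UNIV i])
  moreover have "lk m i \<noteq> 0" using i by (simp add: in_keys_iff)
  ultimately have "lk m i = 1" "(\<Sum>j\<in>UNIV-{i}. lk m j) = 0" by linarith+
  then have "lk m i = 1" "\<forall>j\<in>UNIV-{i}. lk m j = 0" by simp_all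
  then have "m = Poly_Mapping.single i 1"
    by (auto simp: poly_mapping_eq_iff fun_eq_iff lookup_single when_def)
  then show ?thesis ..
qed



locale rhom = fixes \<phi> :: "'a::comm_ring_1 \<Rightarrow> 'b::comm_ring_1"
  assumes hadd: "\<phi> (x + y) = \<phi> x + \<phi> y" and hmult: "\<phi> (x * y) = \<phi> x * \<phi> y" and hone: "\<phi> 1 = 1"
begin
lemma hzero: "\<phi> 0 = 0"
  using hadd[of 0 0] by simp
lemma hminus: "\<phi> (- x) = - \<phi> x"
  using hadd[of x "-x"] hzero by (simp add: add_eq_0_iff)
lemma hdiff: "\<phi> (x - y) = \<phi> x - \<phi> y"
  using hadd[of x "-y"] by (simp add: hminus)
lemma hsum: "\<phi> (sum f A) = (\<Sum>x\<in>A. \<phi> (f x))"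
  by (induction A rule: infinite_finite_induct) (auto simp: hzero hadd)
lemma hprod: "\<phi> (prod f A) = (\<Prod>x\<in>A. \<phi> (f x))"
  by (induction A rule: infinite_finite_induct) (auto simp: hone hmult)
lemma hpower: "\<phi> (x ^ n) = \<phi> x ^ n"
  by (induction n) (auto simp: hone hmult)
lemma hdvd: "x dvd y \<Longrightarrow> \<phi> x dvd \<phi> y"
  by (auto simp: dvd_def hmult)
end

definition C :: "'a::comm_ring_1 \<Rightarrow> ('v, 'a) mpoly" where
  "C a = Poly_Mapping.single 0 a"

lemma rhom_C: "rhom C"
  by unfold_locales (auto simp: C_def single_add mult_single)

lemma C_add: "C (a + b) = C a + C b" and C_mult: "C (a * b) = C a * C b" and C_one: "C 1 = 1"
  and C_zero: "C 0 = 0" and C_diff: "C (a - b) = C a - C b" and C_minus: "C (- a) = - C a"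
  and C_power: "C (a ^ n) = C a ^ n"
  using rhom.hadd[OF rhom_C] rhom.hmult[OF rhom_C] rhom.hone[OF rhom_C] rhom.hzero[OF rhom_C]
   rhom.hdiff[OF rhom_C] rhom.hminus[OF rhom_C] rhom.hpower[OF rhom_C] by blast+

lemma C_eq_iff[simp]: "C a = C b \<longleftrightarrow> a = b"
  by (metis C_def lookup_single_eq)

lemma C_eq_0_iff[simp]: "C a = 0 \<longleftrightarrow> a = 0"
  by (metis C_def lookup_single_eq single_zero)

lemma lookup_C: "lk (C a) m = (if m = 0 then a else 0)"
  by (simp add: C_def lookup_single when_def)

lemma C_of_nat: "C (of_nat n) = of_nat n"
  by (induction n) (simp_all add: C_add C_one C_zero)

lemma expansion: "p = (\<Sum>m\<in>ks p. Poly_Mapping.single m (lk p m))"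
proof (rule poly_mapping_eqI)
  fix k
  show "lk p k = lk (\<Sum>m\<in>ks p. Poly_Mapping.single m (lk p m)) k"
    by (simp add: lookup_sum lookup_single when_def in_keys_iff)
qed

definition mhom :: "('a::comm_ring_1 \<Rightarrow> 'b::comm_ring_1) \<Rightarrow> (('v \<Rightarrow>\<^sub>0 nat) \<Rightarrow> 'b) \<Rightarrow> ('v, 'a) mpoly \<Rightarrow> 'b" where
  "mhom h \<chi> p = (\<Sum>m\<in>ks p. h (lk p m) * \<chi> m)"

locale mh = rhom h for h :: "'a::comm_ring_1 \<Rightarrow> 'b::comm_ring_1" +
  fixes \<chi> :: "('v \<Rightarrow>\<^sub>0 nat) \<Rightarrow> 'b"
  assumes chi0: "\<chi> 0 = 1" and chiadd: "\<chi> (m + n) = \<chi> m * \<chi> n"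
begin

lemma mhom_sup: "finite S \<Longrightarrow> ks p \<subseteq> S \<Longrightarrow> mhom h \<chi> p = (\<Sum>m\<in>S. h (lk p m) * \<chi> m)"
  unfolding mhom_def
  by (rule sum.mono_neutral_left) (auto simp: in_keys_iff hzero)

lemma mhom_add: "mhom h \<chi> (p + q) = mhom h \<chi> p + mhom h \<chi> q"
proof -
  let ?S = "ks p \<union> ks q"
  have "ks (p + q) \<subseteq> ?S" by (rule keys_add)
  then have "mhom h \<chi> (p + q) = (\<Sum>m\<in>?S. h (lk (p+q) m) * \<chi> m)"
    by (intro mhom_sup) auto
  also have "\<dots> = (\<Sum>m\<in>?S. h (lk p m) * \<chi> m) + (\<Sum>m\<in>?S. h (lk q m) * \<chi> m)"
    by (simp add: lookup_add hadd distrib_right sum.distrib)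
  also have "\<dots> = mhom h \<chi> p + mhom h \<chi> q"
    by (subst (1 2) mhom_sup[symmetric]) auto
  finally show ?thesis .
qed

lemma mhom_zero: "mhom h \<chi> 0 = 0"
  by (simp add: mhom_def)

lemma mhom_sum: "mhom h \<chi> (sum f A) = (\<Sum>x\<in>A. mhom h \<chi> (f x))"
  by (induction A rule: infinite_finite_induct) (auto simp: mhom_zero mhom_add)

lemma mhom_single: "mhom h \<chi> (Poly_Mapping.single m a) = h a * \<chi> m"
  by (subst mhom_sup[of "{m}"]) auto

lemma mhom_mult: "mhom h \<chi> (p * q) = mhom h \<chi> p * mhom h \<chi> q"
proof -
  have "p * q = (\<Sum>m\<in>ks p. \<Sum>n\<in>ks q. Poly_Mapping.single m (lk p m) * Poly_Mapping.single n (lk q n))"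
    by (subst (1) expansion, subst (2) expansion, rule sum_product)
  then have "mhom h \<chi> (p * q) = (\<Sum>m\<in>ks p. \<Sum>n\<in>ks q. h (lk p m) * \<chi> m * (h (lk q n) * \<chi> n))"
    by (simp add: mhom_sum mult_single mhom_single hmult chiadd ac_simps)
  also have "\<dots> = mhom h \<chi> p * mhom h \<chi> q"
    by (simp add: mhom_def sum_product)
  finally show ?thesis .
qed

lemma mhom_one: "mhom h \<chi> 1 = 1"
  using mhom_single[of 0 1] by (simp add: hone chi0)

lemma rhom_mhom: "rhom (mhom h \<chi>)"
  by unfold_locales (auto simp: mhom_add mhom_mult mhom_one)

end



lemma idom_test: "(p::(nat \<Rightarrow>\<^sub>0 nat) \<Rightarrow>\<^sub>0 'a::idom) \<noteq> 0 \<Longrightarrow> q \<noteq> 0 \<Longrightarrow> p * q \<noteq> 0"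
  by simp

definition ren :: "('v::finite \<Rightarrow> nat) \<Rightarrow> ('v \<Rightarrow>\<^sub>0 nat) \<Rightarrow> (nat \<Rightarrow>\<^sub>0 nat)" where
  "ren idx m = (\<Sum>v\<in>UNIV. Poly_Mapping.single (idx v) (lk m v))"

lemma ren_add: "ren idx (m + n) = ren idx m + ren idx n"
  by (simp add: ren_def lookup_add single_add sum.distrib)

lemma ren_zero: "ren idx 0 = 0"
  by (simp add: ren_def)

lemma lookup_ren: "inj idx \<Longrightarrow> lk (ren idx m) (idx v) = lk m v"
proof -
  assume inj: "inj idx"
  have "lk (ren idx m) (idx v) = (\<Sum>w\<in>UNIV. (lk m w when idx w = idx v))"
    by (simp add: ren_def lookup_sum lookup_single when_def eq_commute)
  also have "\<dots> = (\<Sum>w\<in>UNIV. (lk m w when w = v))"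
    using inj by (intro sum.cong) (auto simp: inj_eq)
  also have "\<dots> = lk m v" by (simp add: when_def)
  finally show ?thesis .
qed

lemma ren_inj: "inj idx \<Longrightarrow> ren idx m = ren idx n \<Longrightarrow> m = n"
  by (metis lookup_ren poly_mapping_eqI)

definition Cn :: "'a::comm_ring_1 \<Rightarrow> (nat \<Rightarrow>\<^sub>0 nat) \<Rightarrow>\<^sub>0 'a" where
  "Cn a = Poly_Mapping.single 0 a"

lemma mh_ren: "mh (Cn :: 'a::comm_ring_1 \<Rightarrow> _) (\<lambda>m. Poly_Mapping.single (ren idx m) 1)"
  by unfold_locales (auto simp: Cn_def single_add mult_single ren_add ren_zero)

lemma mhom_ren_nonzero:
  fixes p :: "('v::finite, 'a::comm_ring_1) mpoly"
  assumes inj: "inj idx" and p: "p \<noteq> 0"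
  shows "mhom Cn (\<lambda>m. Poly_Mapping.single (ren idx m) 1) p \<noteq> 0"
proof -
  from p obtain m0 where m0: "m0 \<in> ks p" by (metis all_not_in_conv keys_eq_empty)
  have "lk (mhom Cn (\<lambda>m. Poly_Mapping.single (ren idx m) 1) p) (ren idx m0)
     = (\<Sum>m\<in>ks p. (lk p m when ren idx m = ren idx m0))"
    by (simp add: mhom_def lookup_sum Cn_def mult_single lookup_single)
  also have "\<dots> = (\<Sum>m\<in>ks p. (lk p m when m = m0))"
    using ren_inj[OF inj] by (intro sum.cong) (auto simp: when_def)
  also have "\<dots> = lk p m0" using m0 by (simp add: when_def)
  finally show ?thesis using m0 by (auto simp: in_keys_iff)
qed

lemma mpoly_no_zd:
  fixes p q :: "('v::finite, 'a::idom) mpoly"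
  assumes "p \<noteq> 0" "q \<noteq> 0" shows "p * q \<noteq> 0"
proof -
  obtain idx :: "'v \<Rightarrow> nat" and n where "inj_on idx UNIV"
    using finite_imp_inj_to_nat_seg[of "UNIV :: 'v set"] by auto
  then have inj: "inj idx" by simp
  interpret mh "Cn :: 'a \<Rightarrow> _" "\<lambda>m. Poly_Mapping.single (ren idx m) 1" by (rule mh_ren)
  have "mhom Cn (\<lambda>m. Poly_Mapping.single (ren idx m) 1) (p * q) \<noteq> 0"
    using mhom_ren_nonzero[OF inj assms(1)] mhom_ren_nonzero[OF inj assms(2)]
    by (simp add: mhom_mult)
  then show ?thesis by (auto simp: mhom_zero)
qed

lemma mpoly_mult_eq_0_iff:
  fixes p q :: "('v::finite, 'a::idom) mpoly"
  shows "p * q = 0 \<longleftrightarrow> p = 0 \<or> q = 0"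
  using mpoly_no_zd by auto

lemma mpoly_power_ne0:
  fixes p :: "('v::finite, 'a::idom) mpoly"
  shows "p \<noteq> 0 \<Longrightarrow> p ^ n \<noteq> 0"
  by (induction n) (auto simp: mpoly_mult_eq_0_iff)

lemma mpoly_mult_left_cancel:
  fixes p q r :: "('v::finite, 'a::idom) mpoly"
  shows "r \<noteq> 0 \<Longrightarrow> r * p = r * q \<Longrightarrow> p = q"
  by (metis eq_iff_diff_eq_0 mpoly_mult_eq_0_iff right_diff_distrib)



definition homog :: "nat \<Rightarrow> ('v, 'a::zero) mpoly \<Rightarrow> bool" where
  "homog k p \<longleftrightarrow> (\<forall>m\<in>ks p. mon_deg m = k)"

lemma lookup_hcomp: "lk (hcomp k p) m = (if mon_deg m = k then lk p m else 0)"
proof -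
  have "finite {m. (if mon_deg m = k then lk p m else 0) \<noteq> 0}"
    by (rule finite_subset[of _ "ks p"]) (auto simp: in_keys_iff)
  then show ?thesis by (simp add: hcomp_def)
qed

lemma hcomp_add: "hcomp k (p + q) = hcomp k p + hcomp k q"
  by (rule poly_mapping_eqI) (simp add: lookup_hcomp lookup_add)
lemma hcomp_diff: "hcomp k (p - q) = hcomp k p - hcomp k (q::('v,'a::ab_group_add) mpoly)"
  by (rule poly_mapping_eqI) (simp add: lookup_hcomp lookup_minus)
lemma hcomp_minus: "hcomp k (- q) = - hcomp k (q::('v,'a::ab_group_add) mpoly)"
  by (rule poly_mapping_eqI) (simp add: lookup_hcomp)
lemma hcomp_zero[simp]: "hcomp k 0 = 0"
  by (rule poly_mapping_eqI) (simp add: lookup_hcomp)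
lemma hcomp_sum: "hcomp k (sum f A) = (\<Sum>x\<in>A. hcomp k (f x))"
  by (induction A rule: infinite_finite_induct) (auto simp: hcomp_add)

lemma homog_hcomp: "homog k (hcomp k p)"
  by (auto simp: homog_def in_keys_iff lookup_hcomp split: if_splits)

lemma hcomp_homog: "homog e p \<Longrightarrow> hcomp k p = (if k = e then p else 0)"
  by (rule poly_mapping_eqI) (auto simp: homog_def lookup_hcomp in_keys_iff)

lemma homog_zero[simp]: "homog k 0"
  by (simp add: homog_def)
lemma homog_add: "homog k p \<Longrightarrow> homog k q \<Longrightarrow> homog k (p + q)"
  using keys_add[of p q] by (auto simp: homog_def)
lemma homog_iff_hcomp: "homog k p \<longleftrightarrow> hcomp k p = p"
  by (metis hcomp_homog homog_hcomp)
lemma homog_diff: "homog k p \<Longrightarrow> homog k q \<Longrightarrow> homog k (p - (q::('v,'a::ab_group_add) mpoly))"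
  by (simp add: homog_iff_hcomp hcomp_diff)
lemma homog_sum: "(\<And>x. x \<in> A \<Longrightarrow> homog k (f x)) \<Longrightarrow> homog k (sum f A)"
  by (simp add: homog_iff_hcomp hcomp_sum)

lemma homog_mult:
  fixes p q :: "('v::finite, 'a::comm_semiring_1) mpoly"
  shows "homog a p \<Longrightarrow> homog b q \<Longrightarrow> homog (a + b) (p * q)"
  using keys_mult[of p q] by (auto simp: homog_def mon_deg_add)

lemma homog_C: "homog 0 (C a :: ('v::finite,'a::comm_ring_1) mpoly)"
  by (auto simp: homog_def C_def)

lemma homog_one: "homog 0 (1 :: ('v::finite,'a::comm_ring_1) mpoly)"
  using homog_C[of 1] by (simp add: C_one)

lemma homog_power:
  fixes p :: "('v::finite, 'a::comm_ring_1) mpoly"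
  shows "homog a p \<Longrightarrow> homog (n * a) (p ^ n)"
  by (induction n) (auto simp: homog_one dest: homog_mult)

lemma homog_0_const: "homog 0 (p :: ('v::finite,'a::comm_ring_1) mpoly) \<Longrightarrow> p = C (lk p 0)"
  by (rule poly_mapping_eqI) (auto simp: homog_def lookup_C in_keys_iff mon_deg_0_iff)

lemma total_deg_ge: "m \<in> ks p \<Longrightarrow> mon_deg m \<le> total_deg p"
  unfolding total_deg_def by (rule Max_ge) auto

lemma hcomp_above: "total_deg p < k \<Longrightarrow> hcomp k p = 0"
proof (rule poly_mapping_eqI)
  fix m assume "total_deg p < k"
  then have "m \<notin> ks p \<or> mon_deg m \<noteq> k" using total_deg_ge[of m p] by force
  then show "lk (hcomp k p) m = lk 0 m" by (auto simp: lookup_hcomp in_keys_iff)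
qed

lemma hcomp_ne0_le: "hcomp k p \<noteq> 0 \<Longrightarrow> k \<le> total_deg p"
  using hcomp_above not_le by blast

lemma total_deg_attained: "p \<noteq> 0 \<Longrightarrow> \<exists>m\<in>ks p. mon_deg m = total_deg p"
proof -
  assume "p \<noteq> 0"
  then have ne: "ks p \<noteq> {}" by simp
  have "total_deg p \<in> insert 0 (mon_deg ` ks p)"
    unfolding total_deg_def by (rule Max_in) auto
  moreover obtain m where "m \<in> ks p" using ne by blast
  moreover have "mon_deg m \<le> total_deg p" using calculation(2) total_deg_ge by blast
  ultimately show ?thesis by auto
qed

lemma hcomp_top_ne0: "p \<noteq> 0 \<Longrightarrow> hcomp (total_deg p) p \<noteq> 0"
proof -
  assume "p \<noteq> 0"
  then obtain m where m: "m \<in> ks p" "mon_deg m = total_deg p" using total_deg_attained by blast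
  then have "lk (hcomp (total_deg p) p) m \<noteq> 0" by (simp add: lookup_hcomp in_keys_iff)
  then show ?thesis by auto
qed

lemma decomp: "total_deg p \<le> N \<Longrightarrow> p = (\<Sum>k\<le>N. hcomp k p)"
proof (rule poly_mapping_eqI)
  fix m assume N: "total_deg p \<le> N"
  have "lk (\<Sum>k\<le>N. hcomp k p) m = (\<Sum>k\<le>N. if k = mon_deg m then lk p m else 0)"
    by (simp add: lookup_sum lookup_hcomp eq_commute)
  also have "\<dots> = lk p m"
  proof (cases "m \<in> ks p")
    case True then show ?thesis using total_deg_ge[OF True] N by simp
  next
    case False then show ?thesis by (simp add: in_keys_iff)
  qed
  finally show "lk p m = lk (\<Sum>k\<le>N. hcomp k p) m" by simp
qed

lemma total_deg_0: "total_deg (p :: ('v::finite,'a::comm_ring_1) mpoly) = 0 \<Longrightarrow> p = C (lk p 0)"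
  by (rule homog_0_const) (auto simp: homog_def dest: total_deg_ge)

lemma total_deg_homog: "homog k p \<Longrightarrow> p \<noteq> 0 \<Longrightarrow> total_deg p = k"
  using total_deg_attained by (fastforce simp: homog_def)

lemma total_deg_C: "total_deg (C a :: ('v::finite,'a::comm_ring_1) mpoly) = 0"
  by (cases "a = 0") (simp add: C_zero total_deg_def, rule total_deg_homog[OF homog_C], simp)

lemma total_deg_le: "(\<And>m. m \<in> ks p \<Longrightarrow> mon_deg m \<le> N) \<Longrightarrow> total_deg p \<le> N"
  unfolding total_deg_def by (subst Max_le_iff) auto

lemma total_deg_mult_le:
  fixes p q :: "('v::finite, 'a::comm_semiring_1) mpoly"
  shows "total_deg (p * q) \<le> total_deg p + total_deg q"
proof (rule total_deg_le)
  fix m assume "m \<in> ks (p * q)"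
  then obtain a b where "m = a + b" "a \<in> ks p" "b \<in> ks q" using keys_mult by blast
  then show "mon_deg m \<le> total_deg p + total_deg q"
    by (simp add: mon_deg_add add_mono total_deg_ge)
qed

lemma hcomp_mult_homog:
  fixes p q :: "('v::finite, 'a::comm_ring_1) mpoly"
  assumes "homog e p"
  shows "hcomp k (p * q) = (if e \<le> k then p * hcomp (k - e) q else 0)"
proof -
  define N where "N = max (total_deg q) k"
  have "p * q = (\<Sum>j\<le>N. p * hcomp j q)"
    by (subst decomp[of q N]) (auto simp: N_def sum_distrib_left)
  then have "hcomp k (p * q) = (\<Sum>j\<le>N. hcomp k (p * hcomp j q))"
    by (simp add: hcomp_sum)
  also have "\<dots> = (\<Sum>j\<le>N. if j = k - e \<and> e \<le> k then p * hcomp (k - e) q else 0)"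
    by (intro sum.cong refl, subst hcomp_homog[OF homog_mult[OF assms homog_hcomp]]) auto
  also have "\<dots> = (if e \<le> k then p * hcomp (k - e) q else 0)"
    by (auto simp: N_def)
  finally show ?thesis .
qed

lemma hcomp_mult:
  fixes p q :: "('v::finite, 'a::comm_ring_1) mpoly"
  shows "hcomp k (p * q) = (\<Sum>i\<le>k. hcomp i p * hcomp (k - i) q)"
proof -
  define N where "N = max (total_deg p) k"
  have "p * q = (\<Sum>i\<le>N. hcomp i p * q)"
    by (subst decomp[of p N]) (auto simp: N_def sum_distrib_right)
  then have "hcomp k (p * q) = (\<Sum>i\<le>N. hcomp k (hcomp i p * q))"
    by (simp add: hcomp_sum)
  also have "\<dots> = (\<Sum>i\<le>N. if i \<le> k then hcomp i p * hcomp (k - i) q else 0)"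
    by (intro sum.cong refl, subst hcomp_mult_homog[OF homog_hcomp]) auto
  also have "\<dots> = (\<Sum>i\<le>k. hcomp i p * hcomp (k - i) q)"
    by (rule sum.mono_neutral_cong_right) (auto simp: N_def)
  finally show ?thesis .
qed

lemma total_deg_mult:
  fixes p q :: "('v::finite, 'a::idom) mpoly"
  assumes "p \<noteq> 0" "q \<noteq> 0"
  shows "total_deg (p * q) = total_deg p + total_deg q"
proof -
  let ?a = "total_deg p" and ?b = "total_deg q"
  have "hcomp (?a + ?b) (p * q) = (\<Sum>i\<le>?a+?b. if i = ?a then hcomp ?a p * hcomp ?b q else 0)"
    unfolding hcomp_mult
  proof (intro sum.cong refl)
    fix i assume "i \<in> {..?a+?b}"
    show "hcomp i p * hcomp (?a + ?b - i) q = (if i = ?a then hcomp ?a p * hcomp ?b q else 0)"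
    proof (cases "i < ?a")
      case True then show ?thesis using hcomp_above[of q "?a + ?b - i"] by auto
    next
      case False then show ?thesis using hcomp_above[of p i] by auto
    qed
  qed
  also have "\<dots> = hcomp ?a p * hcomp ?b q" by simp
  also have "\<dots> \<noteq> 0" using assms hcomp_top_ne0 mpoly_no_zd by blast
  finally have "?a + ?b \<le> total_deg (p * q)" by (rule hcomp_ne0_le)
  with total_deg_mult_le[of p q] show ?thesis by simp
qed

lemma total_deg_one: "total_deg (1 :: ('v::finite,'a::comm_ring_1) mpoly) = 0"
  using total_deg_C[of 1] by (simp add: C_one)

lemma unit_const:
  fixes p q :: "('v::finite, 'a::idom) mpoly"
  assumes "p * q = 1" shows "p = C (lk p 0)" "lk p 0 \<noteq> 0"
proof -
  have "p \<noteq> 0" "q \<noteq> 0" using assms by auto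
  then have "total_deg p + total_deg q = 0" using total_deg_mult assms total_deg_one by metis
  then show *: "p = C (lk p 0)" by (intro total_deg_0) simp
  then show "lk p 0 \<noteq> 0" using \<open>p \<noteq> 0\<close> by (metis C_zero)
qed



lemma lookup_C_mult: "lk (C c * p) m = c * lk p m"
  unfolding C_def mult_map_scale_conv_mult[symmetric] by (simp add: Poly_Mapping.map.rep_eq when_def)

lemma leibniz_ext:
  fixes D :: "('v::finite, 'a::comm_ring_1) mpoly \<Rightarrow> ('v, 'a) mpoly"
  assumes add: "\<And>p q. D (p + q) = D p + D q"
    and sing: "\<And>m n a b. D (Poly_Mapping.single m a * Poly_Mapping.single n b)
       = D (Poly_Mapping.single m a) * Poly_Mapping.single n b + Poly_Mapping.single m a * D (Poly_Mapping.single n b)"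
  shows "D (p * q) = D p * q + p * D q"
proof -
  have D0: "D 0 = 0" using add[of 0 0] by simp
  have Dsum: "D (sum f A) = (\<Sum>x\<in>A. D (f x))" for f :: "_ \<Rightarrow> ('v, 'a) mpoly" and A
    by (induction A rule: infinite_finite_induct) (auto simp: D0 add)
  let ?s = "\<lambda>p m. Poly_Mapping.single m (lk p m)"
  have "p * q = (\<Sum>m\<in>ks p. \<Sum>n\<in>ks q. ?s p m * ?s q n)"
    by (subst (1) expansion, subst (2) expansion, rule sum_product)
  then have "D (p * q) = (\<Sum>m\<in>ks p. \<Sum>n\<in>ks q. D (?s p m) * ?s q n + ?s p m * D (?s q n))"
    by (simp add: Dsum sing)
  also have "\<dots> = (\<Sum>m\<in>ks p. D (?s p m)) * (\<Sum>n\<in>ks q. ?s q n) + (\<Sum>m\<in>ks p. ?s p m) * (\<Sum>n\<in>ks q. D (?s q n))"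
    by (simp add: sum.distrib sum_product)
  also have "\<dots> = D p * q + p * D q"
    by (simp add: Dsum[symmetric] expansion[symmetric])
  finally show ?thesis .
qed

lemma inj_add_single: "inj (\<lambda>m::'v \<Rightarrow>\<^sub>0 nat. m + s)"
  by (auto simp: inj_def)

lemma lookup_pdiff: "lk (pdiff i p) m = of_nat (lk m i + 1) * lk p (m + Poly_Mapping.single i 1)"
proof -
  have "finite {m. of_nat (lk m i + 1) * lk p (m + Poly_Mapping.single i 1) \<noteq> 0}"
    by (rule finite_subset[of _ "(\<lambda>m. m + Poly_Mapping.single i 1) -` ks p"])
       (auto simp: in_keys_iff intro!: finite_vimageI inj_add_single)
  then show ?thesis by (simp add: pdiff_def)
qed

lemma pdiff_add: "pdiff i (p + q) = pdiff i p + pdiff i q"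
  by (rule poly_mapping_eqI) (simp add: lookup_pdiff lookup_add distrib_left)

lemma pdiff_single:
  "pdiff i (Poly_Mapping.single k a) = Poly_Mapping.single (k - Poly_Mapping.single i 1) (of_nat (lk k i) * a)"
proof (rule poly_mapping_eqI)
  fix m
  show "lk (pdiff i (Poly_Mapping.single k a)) m = lk (Poly_Mapping.single (k - Poly_Mapping.single i 1) (of_nat (lk k i) * a)) m"
  proof (cases "k = m + Poly_Mapping.single i 1")
    case True
    then have "k - Poly_Mapping.single i 1 = m" by simp
    then show ?thesis using True by (simp add: lookup_pdiff lookup_add)
  next
    case False
    show ?thesis
    proof (cases "lk k i = 0")
      case True then show ?thesis using False by (simp add: lookup_pdiff lookup_single)
    next
      case ne: False
      have "k = (k - Poly_Mapping.single i 1) + Poly_Mapping.single i 1"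
        using ne by (auto simp: poly_mapping_eq_iff fun_eq_iff lookup_add lookup_minus lookup_single when_def)
      then have "k - Poly_Mapping.single i 1 \<noteq> m" using False by metis
      then show ?thesis using False by (simp add: lookup_pdiff lookup_single when_def)
    qed
  qed
qed

lemma mon_sub_add: "lk k i \<noteq> 0 \<Longrightarrow> k - Poly_Mapping.single i 1 + l = k + l - Poly_Mapping.single i (1::nat)"
  by (auto simp: poly_mapping_eq_iff fun_eq_iff lookup_add lookup_minus lookup_single when_def)

lemma pdiff_mult: "pdiff i (p * q) = pdiff i p * q + p * pdiff i (q :: ('v::finite, 'a::comm_ring_1) mpoly)"
proof (rule leibniz_ext[OF pdiff_add])
  fix m n :: "'v \<Rightarrow>\<^sub>0 nat" and a b :: 'a
  let ?e = "Poly_Mapping.single i (1::nat)"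
  have 1: "Poly_Mapping.single (m - ?e + n) (of_nat (lk m i) * a * b) = Poly_Mapping.single (m + n - ?e) (of_nat (lk m i) * a * b)"
  proof (cases "lk m i = 0")
    case False then show ?thesis using mon_sub_add[OF False, of n] by simp
  qed simp
  have 2: "Poly_Mapping.single (m + (n - ?e)) (a * (of_nat (lk n i) * b)) = Poly_Mapping.single (m + n - ?e) (of_nat (lk n i) * a * b)"
  proof (cases "lk n i = 0")
    case False then show ?thesis using mon_sub_add[OF False, of m] by (simp add: ac_simps)
  qed simp
  show "pdiff i (Poly_Mapping.single m a * Poly_Mapping.single n b) =
       pdiff i (Poly_Mapping.single m a) * Poly_Mapping.single n b + Poly_Mapping.single m a * pdiff i (Poly_Mapping.single n b)"
    using 1 2 by (simp add: mult_single pdiff_single lookup_add single_add[symmetric] algebra_simps)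
qed

lemma pdiff_zero[simp]: "pdiff i 0 = 0"
  by (rule poly_mapping_eqI) (simp add: lookup_pdiff)

lemma pdiff_sum: "pdiff i (sum f A) = (\<Sum>x\<in>A. pdiff i (f x))"
  by (induction A rule: infinite_finite_induct) (auto simp: pdiff_add)

lemma pdiff_minus: "pdiff i (- p) = - pdiff i (p :: ('v, 'a::comm_ring_1) mpoly)"
  using pdiff_add[of i p "-p"] by (simp add: add_eq_0_iff)

lemma pdiff_diff: "pdiff i (p - q) = pdiff i p - pdiff i (q :: ('v, 'a::comm_ring_1) mpoly)"
  using pdiff_add[of i p "-q"] by (simp add: pdiff_minus)

lemma pdiff_C[simp]: "pdiff i (C a :: ('v::finite, 'a::comm_ring_1) mpoly) = 0"
  by (simp add: C_def pdiff_single)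

lemma pdiff_C_mult: "pdiff i (C a * p) = C a * pdiff i (p :: ('v::finite, 'a::comm_ring_1) mpoly)"
  by (simp add: pdiff_mult)

lemma pdiff_power: "pdiff i (p ^ Suc n) = C (of_nat (Suc n)) * p ^ n * pdiff i (p :: ('v::finite, 'a::comm_ring_1) mpoly)"
proof (induction n)
  case 0 then show ?case by (simp add: C_one)
next
  case (Suc n)
  have "pdiff i (p ^ Suc (Suc n)) = pdiff i p * p ^ Suc n + p * pdiff i (p ^ Suc n)"
    by (simp add: pdiff_mult)
  also have "\<dots> = C (of_nat (Suc (Suc n))) * p ^ Suc n * pdiff i p"
    by (simp only: Suc C_add C_one of_nat_Suc) (simp add: algebra_simps)
  finally show ?case .
qed

lemma lookup_pdiff_0: "lk (pdiff i p) 0 = lk p (Poly_Mapping.single i 1)"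
  by (simp add: lookup_pdiff)

lemma pdiff_homog1:
  fixes l :: "('v::finite, 'a::comm_ring_1) mpoly"
  assumes "homog 1 l" shows "pdiff i l = C (lk l (Poly_Mapping.single i 1))"
proof (rule poly_mapping_eqI)
  fix m
  show "lk (pdiff i l) m = lk (C (lk l (Poly_Mapping.single i 1))) m"
  proof (cases "m = 0")
    case True then show ?thesis by (simp add: lookup_pdiff lookup_C)
  next
    case False
    then have "mon_deg (m + Poly_Mapping.single i 1) \<noteq> 1"
      by (simp add: mon_deg_add mon_deg_0_iff)
    then have "lk l (m + Poly_Mapping.single i 1) = 0" using assms by (auto simp: homog_def in_keys_iff)
    then show ?thesis using False by (simp add: lookup_pdiff lookup_C)
  qed
qed

definition euler :: "('v, 'a::comm_ring_1) mpoly \<Rightarrow> ('v, 'a) mpoly" where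
  "euler p = Abs_poly_mapping (\<lambda>m. of_nat (mon_deg m) * lk p m)"

lemma lookup_euler: "lk (euler p) m = of_nat (mon_deg m) * lk p m"
proof -
  have "finite {m. of_nat (mon_deg m) * lk p m \<noteq> 0}"
    by (rule finite_subset[of _ "ks p"]) (auto simp: in_keys_iff)
  then show ?thesis by (simp add: euler_def)
qed

lemma euler_add: "euler (p + q) = euler p + euler q"
  by (rule poly_mapping_eqI) (simp add: lookup_euler lookup_add distrib_left)

lemma euler_single: "euler (Poly_Mapping.single k a) = Poly_Mapping.single k (of_nat (mon_deg k) * a)"
  by (rule poly_mapping_eqI) (simp add: lookup_euler lookup_single when_def)

lemma euler_mult: "euler (p * q) = euler p * q + p * euler (q :: ('v::finite, 'a::comm_ring_1) mpoly)"
proof (rule leibniz_ext[OF euler_add])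
  fix m n :: "'v \<Rightarrow>\<^sub>0 nat" and a b :: 'a
  show "euler (Poly_Mapping.single m a * Poly_Mapping.single n b) =
       euler (Poly_Mapping.single m a) * Poly_Mapping.single n b + Poly_Mapping.single m a * euler (Poly_Mapping.single n b)"
    by (simp add: mult_single euler_single mon_deg_add single_add[symmetric] algebra_simps)
qed

lemma euler_homog: "homog k p \<Longrightarrow> euler p = C (of_nat k) * p"
  by (rule poly_mapping_eqI) (auto simp: lookup_euler lookup_C_mult homog_def in_keys_iff)

lemma euler_diff: "euler (p - q) = euler p - euler (q :: ('v, 'a::comm_ring_1) mpoly)"
  by (rule poly_mapping_eqI) (simp add: lookup_euler lookup_minus algebra_simps)



definition X :: "'v \<Rightarrow> ('v, 'a::comm_ring_1) mpoly" where
  "X v = Poly_Mapping.single (Poly_Mapping.single v 1) 1"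

lemma X_power: "X v ^ k = Poly_Mapping.single (Poly_Mapping.single v k) 1"
  by (induction k) (simp_all add: X_def mult_single single_add[symmetric] add.commute)

lemma prod_singles: "(\<Prod>v\<in>A. Poly_Mapping.single (f v) (1::'a::comm_ring_1)) = Poly_Mapping.single (\<Sum>v\<in>A. f v) 1"
  by (induction A rule: infinite_finite_induct) (simp_all add: mult_single)

lemma mon_expand: "(\<Sum>v\<in>UNIV. Poly_Mapping.single v (lk m v)) = (m :: 'v::finite \<Rightarrow>\<^sub>0 nat)"
  by (rule poly_mapping_eqI) (simp add: lookup_sum lookup_single when_def)

lemma single_as_prod:
  "Poly_Mapping.single m a = C a * (\<Prod>v\<in>UNIV. X v ^ lk m v :: ('v::finite, 'a::comm_ring_1) mpoly)"
  by (simp add: X_power prod_singles mon_expand C_def mult_single)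

lemma single_1_inj: "Poly_Mapping.single v (1::nat) = Poly_Mapping.single w 1 \<Longrightarrow> v = w"
  by (metis lookup_single_eq lookup_single_not_eq one_neq_zero)

lemma homog1_expand:
  fixes l :: "('v::finite, 'a::comm_ring_1) mpoly"
  assumes "homog 1 l"
  shows "l = (\<Sum>v\<in>UNIV. C (lk l (Poly_Mapping.single v 1)) * X v)"
proof (rule poly_mapping_eqI)
  fix m
  have "lk (\<Sum>v\<in>UNIV. C (lk l (Poly_Mapping.single v 1)) * X v) m
     = (\<Sum>v\<in>UNIV. (lk l (Poly_Mapping.single v 1) when m = Poly_Mapping.single v 1))"
    by (simp add: lookup_sum X_def C_def mult_single lookup_single eq_commute)
  also have "\<dots> = lk l m"
  proof (cases "mon_deg m = 1")
    case True
    then obtain w where w: "m = Poly_Mapping.single w 1" using mon_deg_1 by blast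
    have "(\<Sum>v\<in>UNIV. (lk l (Poly_Mapping.single v 1) when m = Poly_Mapping.single v 1))
        = (\<Sum>v\<in>UNIV. (lk l (Poly_Mapping.single v 1) when v = w))"
      by (intro sum.cong) (auto simp: w when_def dest: single_1_inj single_1_inj[unfolded One_nat_def])
    then show ?thesis by (simp add: w when_def)
  next
    case False
    then have "lk l m = 0" using assms by (auto simp: homog_def in_keys_iff)
    moreover have "m \<noteq> Poly_Mapping.single v 1" for v using False by auto
    ultimately show ?thesis by (simp add: when_def)
  qed
  finally show "lk l m = lk (\<Sum>v\<in>UNIV. C (lk l (Poly_Mapping.single v 1)) * X v) m" by simp
qed

lemma dvd_power_diff_gen: "(d::'a::comm_ring_1) dvd a - b \<Longrightarrow> d dvd a ^ n - b ^ n"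
proof (induction n)
  case (Suc n)
  have "a ^ Suc n - b ^ Suc n = a * (a ^ n - b ^ n) + (a - b) * b ^ n"
    by (simp add: algebra_simps)
  then show ?case using Suc by (simp add: dvd_add dvd_mult dvd_mult2)
qed simp

lemma dvd_prod_diff_gen: "(\<And>v. v \<in> A \<Longrightarrow> (d::'a::comm_ring_1) dvd F v - G v) \<Longrightarrow> d dvd prod F A - prod G A"
proof (induction A rule: infinite_finite_induct)
  case (insert x F')
  have "prod F (insert x F') - prod G (insert x F') = F x * (prod F F' - prod G F') + (F x - G x) * prod G F'"
    using insert.hyps by (simp add: algebra_simps)
  then show ?case using insert by (simp add: dvd_add dvd_mult dvd_mult2)
qed auto

lemma subst_exists:
  fixes L l :: "('v::finite, 'a::field) mpoly"
  assumes hl: "homog 1 l" and l0: "l \<noteq> 0" and L: "L = C c0 + l"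
  obtains \<sigma> where "rhom \<sigma>" "\<And>a. \<sigma> (C a) = C a" "\<sigma> L = 0" "\<And>p. L dvd p - \<sigma> p"
proof -
  define lam where "lam v = lk l (Poly_Mapping.single v 1)" for v
  have lexp: "l = (\<Sum>v\<in>UNIV. C (lam v) * X v)" unfolding lam_def by (rule homog1_expand[OF hl])
  obtain i where i: "lam i \<noteq> 0"
  proof (rule ccontr)
    assume "\<not> thesis"
    then have "\<forall>v. lam v = 0" using that by blast
    then have "l = 0" using lexp by (simp add: C_zero)
    then show False using l0 by simp
  qed
  define y where "y v = (if v = i then X i - C (1 / lam i) * L else X v)" for v
  define \<chi> where "\<chi> m = (\<Prod>v\<in>UNIV. y v ^ lk m v)" for m
  interpret mh C \<chi>
    by unfold_locales (simp_all add: C_add C_mult C_one \<chi>_def lookup_add power_add prod.distrib)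
  define \<sigma> where "\<sigma> = mhom C \<chi>"
  have r: "rhom \<sigma>" unfolding \<sigma>_def by (rule rhom_mhom)
  have sC: "\<sigma> (C a) = C a" for a
    unfolding \<sigma>_def by (metis C_def mhom_single chi0 mult.right_neutral)
  have sX: "\<sigma> (X v) = y v" for v
  proof -
    have "\<chi> (Poly_Mapping.single v 1) = (\<Prod>w\<in>UNIV. if w = v then y w else 1)"
      unfolding \<chi>_def by (intro prod.cong) (auto simp: lookup_single)
    also have "\<dots> = y v" by simp
    finally show ?thesis unfolding \<sigma>_def X_def using mhom_single by (simp add: C_one)
  qed
  have sL: "\<sigma> L = 0"
  proof -
    have "\<sigma> L = C c0 + (\<Sum>v\<in>UNIV. C (lam v) * y v)"
      using r by (simp add: L lexp rhom.hadd rhom.hsum rhom.hmult sC sX)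
    also have "(\<Sum>v\<in>UNIV. C (lam v) * y v) = (\<Sum>v\<in>UNIV. C (lam v) * X v - (if v = i then L else 0))"
    proof (intro sum.cong refl)
      fix v
      have "C (lam i) * (C (1 / lam i) * L) = L"
        by (simp add: mult.assoc[symmetric] C_mult[symmetric] i C_one)
      then show "C (lam v) * y v = C (lam v) * X v - (if v = i then L else 0)"
        by (simp add: y_def right_diff_distrib)
    qed
    also have "\<dots> = l - L" by (simp add: sum_subtractf lexp)
    finally show ?thesis by (simp add: L)
  qed
  have dX: "L dvd X v - \<sigma> (X v)" for v
    by (cases "v = i") (simp_all add: sX y_def)
  have dmon: "L dvd Poly_Mapping.single m a - \<sigma> (Poly_Mapping.single m a)" for m a
  proof -
    have e: "Poly_Mapping.single m a = C a * (\<Prod>v\<in>UNIV. X v ^ lk m v)" by (rule single_as_prod)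
    have h1: "\<sigma> (C a * (\<Prod>v\<in>UNIV. X v ^ lk m v)) = C a * (\<Prod>v\<in>UNIV. \<sigma> (X v) ^ lk m v)"
      using r by (simp add: rhom.hmult rhom.hprod rhom.hpower sC)
    have h2: "L dvd (\<Prod>v\<in>UNIV. X v ^ lk m v) - (\<Prod>v\<in>UNIV. \<sigma> (X v) ^ lk m v)"
      by (intro dvd_prod_diff_gen dvd_power_diff_gen dX)
    have "Poly_Mapping.single m a - \<sigma> (Poly_Mapping.single m a) = C a * ((\<Prod>v\<in>UNIV. X v ^ lk m v) - (\<Prod>v\<in>UNIV. \<sigma> (X v) ^ lk m v))"
      unfolding e h1 by (simp add: right_diff_distrib)
    then show ?thesis using h2 by (simp add: dvd_mult)
  qed
  have "L dvd p - \<sigma> p" for p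
  proof -
    define S where "S = (\<Sum>m\<in>ks p. Poly_Mapping.single m (lk p m))"
    have pS: "p = S" unfolding S_def by (rule expansion)
    have "p - \<sigma> p = S - \<sigma> S" using pS by (rule arg_cong[where f="\<lambda>x. x - \<sigma> x"])
    also have "\<dots> = (\<Sum>m\<in>ks p. Poly_Mapping.single m (lk p m) - \<sigma> (Poly_Mapping.single m (lk p m)))"
      unfolding S_def using r by (simp add: rhom.hsum sum_subtractf)
    finally show ?thesis by (simp add: dvd_sum dmon)
  qed
  then show ?thesis using that r sC sL by blast
qed



lemma const_solve:
  fixes P :: "('v::finite, 'a::field) mpoly"
  assumes "C a * P = C b" "a \<noteq> 0" shows "P = C (b / a)"
proof -
  have "P = C (1 / a) * (C a * P)" using assms(2) by (simp add: mult.assoc[symmetric] C_mult[symmetric] C_one)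
  also have "\<dots> = C (b / a)" using assms(1) by (simp add: C_mult[symmetric])
  finally show ?thesis .
qed

lemma hcomp_C: "hcomp k (C a :: ('v::finite,'a::comm_ring_1) mpoly) = (if k = 0 then C a else 0)"
  by (simp add: hcomp_homog[OF homog_C])

lemma lemma_Z:
  fixes L l R P :: "('v::finite, 'a::field) mpoly"
  assumes hl: "homog 1 l" and l0: "l \<noteq> 0" and c0: "c0 \<noteq> 0" and L: "L = C c0 + l"
    and hP: "homog k P" and PLR: "P = L * R"
  shows "P = 0"
proof (rule ccontr)
  assume P0: "P \<noteq> 0"
  then have R0: "R \<noteq> 0" using PLR by auto
  have comp: "hcomp j P = C c0 * hcomp j R + (if 1 \<le> j then l * hcomp (j - 1) R else 0)" for j
    by (simp add: PLR L distrib_right hcomp_add hcomp_mult_homog[OF homog_C] hcomp_mult_homog[OF hl])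
  define D where "D = total_deg R"
  have "hcomp (D + 1) P = l * hcomp D R"
    using comp[of "D+1"] hcomp_above[of R "D+1"] by (simp add: D_def)
  also have "\<dots> \<noteq> 0" using l0 hcomp_top_ne0[OF R0] mpoly_no_zd by (auto simp: D_def)
  finally have a: "hcomp (D + 1) P \<noteq> 0" .
  have ex: "\<exists>j. hcomp j R \<noteq> 0" using hcomp_top_ne0[OF R0] by blast
  define j0 where "j0 = (LEAST j. hcomp j R \<noteq> 0)"
  have j0: "hcomp j0 R \<noteq> 0" unfolding j0_def using ex by (rule LeastI_ex)
  have j0D: "j0 \<le> D" unfolding j0_def D_def using hcomp_top_ne0[OF R0] by (rule Least_le)
  have below: "hcomp (j0 - 1) R = 0" if "1 \<le> j0"
  proof -
    have "j0 - 1 < j0" using that by simp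
    then show ?thesis unfolding j0_def using not_less_Least by blast
  qed
  have "hcomp j0 P = C c0 * hcomp j0 R" using comp[of j0] below by auto
  also have "\<dots> \<noteq> 0" using c0 j0 mpoly_no_zd[of "C c0" "hcomp j0 R"] by simp
  finally have b: "hcomp j0 P \<noteq> 0" .
  have "D + 1 = k" "j0 = k" using a b hcomp_homog[OF hP] by (auto split: if_splits)
  then show False using j0D by simp
qed

lemma linear_factor:
  fixes f g h :: "('v::finite, 'a::field) mpoly"
  assumes fgh: "f = g * h" and h0: "hcomp 0 h = 0" and l0: "hcomp 1 f \<noteq> 0"
    and th: "total_deg h < d" and van: "\<forall>k<d. k \<noteq> 1 \<longrightarrow> hcomp k f = 0"
  shows "hcomp 1 f dvd h"
proof -
  let ?l = "hcomp 1 f"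
  have "?l = hcomp 0 g * hcomp 1 h + hcomp 1 g * hcomp 0 h"
    by (simp add: fgh hcomp_mult)
  then have l_eq: "?l = hcomp 0 g * hcomp 1 h" using h0 by simp
  then have "hcomp 0 g \<noteq> 0" using l0 by auto
  moreover have g0: "hcomp 0 g = C (lk (hcomp 0 g) 0)" by (rule homog_0_const[OF homog_hcomp])
  ultimately obtain c where c: "hcomp 0 g = C c" "c \<noteq> 0" by (metis C_zero)
  have "?l dvd hcomp j h" for j
  proof (induction j rule: less_induct)
    case (less j)
    show ?case
    proof (cases "j < d")
      case False then show ?thesis using hcomp_above[of h j] th by simp
    next
      case True
      have dvf: "?l dvd hcomp j f" using van True by (cases "j = 1") auto
      show ?thesis
      proof (cases j)
        case 0 then show ?thesis using h0 by simp
      next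
        case (Suc j')
        have eq: "hcomp j f = hcomp 0 g * hcomp j h + (\<Sum>i<j. hcomp (Suc i) g * hcomp (j - Suc i) h)"
          unfolding fgh hcomp_mult Suc by (subst sum.atMost_Suc_shift) (simp add: lessThan_Suc_atMost)
        moreover have "?l dvd (\<Sum>i<j. hcomp (Suc i) g * hcomp (j - Suc i) h)"
          using less Suc by (intro dvd_sum dvd_mult) auto
        moreover have "hcomp 0 g * hcomp j h = hcomp j f - (\<Sum>i<j. hcomp (Suc i) g * hcomp (j - Suc i) h)"
          using eq by simp
        ultimately have "?l dvd hcomp 0 g * hcomp j h" using dvf by (simp add: dvd_diff)
        then have "?l dvd C (1 / c) * (hcomp 0 g * hcomp j h)" by (rule dvd_mult)
        moreover have "C (1 / c) * (hcomp 0 g * hcomp j h) = hcomp j h"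
          using c by (simp add: mult.assoc[symmetric] C_mult[symmetric] C_one)
        ultimately show ?thesis by simp
      qed
    qed
  qed
  then have "?l dvd (\<Sum>j\<le>total_deg h. hcomp j h)" by (simp add: dvd_sum)
  then show ?thesis using decomp[of h "total_deg h"] by simp
qed



theorem corollary4p5:
  fixes f :: "('v::finite, 'a::field_char_0) mpoly" and d :: nat
  assumes "d \<ge> 2"
    and "\<forall>m\<in>Poly_Mapping.keys f. mon_deg m \<in> {0, 1, d}"
    and "reducible f"
    and "jacobian_unimodular f"
  shows "((d \<le> 3 \<or> hcomp 0 f = 0) \<longrightarrow> (\<exists>g. g dvd f \<and> total_deg g = 1))
       \<and> ((\<exists>g. g dvd f \<and> total_deg g = 1) \<longrightarrow>
            hcomp 0 f = 0 \<and> hcomp 1 f dvd f \<and> (hcomp 1 f)^2 dvd hcomp d f)"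
proof -
  note d2 = assms(1) and degs = assms(2)
  let ?f0 = "hcomp 0 f" and ?f1 = "hcomp 1 f" and ?fd = "hcomp d f"
  have fsplit: "f = ?f0 + ?f1 + ?fd"
  proof (rule poly_mapping_eqI)
    fix m
    show "lk f m = lk (?f0 + ?f1 + ?fd) m"
    proof (cases "m \<in> ks f")
      case True then show ?thesis using degs d2 by (auto simp: lookup_add lookup_hcomp)
    next
      case False then show ?thesis by (simp add: lookup_add lookup_hcomp in_keys_iff)
    qed
  qed
  have van: "hcomp k f = 0" if "k \<noteq> 0" "k \<noteq> 1" "k \<noteq> d" for k
  proof (rule poly_mapping_eqI)
    fix m
    show "lk (hcomp k f) m = lk 0 m"
    proof (cases "m \<in> ks f")
      case True then have "mon_deg m \<noteq> k" using degs that by auto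
      then show ?thesis by (simp add: lookup_hcomp)
    next
      case False then show ?thesis by (simp add: lookup_hcomp in_keys_iff)
    qed
  qed
  obtain g h where fgh: "f = g * h" and tg: "total_deg g \<ge> 1" and th: "total_deg h \<ge> 1"
    using assms(3) unfolding reducible_def by blast
  have g0: "g \<noteq> 0" and h0: "h \<noteq> 0" using tg th by (auto simp: total_deg_def)
  have tf: "total_deg f = total_deg g + total_deg h" unfolding fgh by (rule total_deg_mult[OF g0 h0])
  have f0: "f \<noteq> 0" unfolding fgh by (rule mpoly_no_zd[OF g0 h0])
  have tfd: "total_deg f = d"
  proof -
    obtain m where "m \<in> ks f" "mon_deg m = total_deg f" using total_deg_attained[OF f0] by blast
    then show ?thesis using degs tf tg th by auto
  qed
  have fd0: "?fd \<noteq> 0" using hcomp_top_ne0[OF f0] tfd by simp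
  obtain a where J: "(\<Sum>i\<in>UNIV. a i * pdiff i f) = 1"
    using assms(4) unfolding jacobian_unimodular_def by blast
  have f1ne: "?f1 \<noteq> 0"
  proof
    assume f1z: "?f1 = 0"
    have "hcomp 0 (pdiff i f) = 0" for i
    proof -
      have "lk f (Poly_Mapping.single i 1) = lk ?f1 (Poly_Mapping.single i 1)"
        by (simp add: lookup_hcomp)
      then have "lk (pdiff i f) 0 = 0" using f1z by (simp add: lookup_pdiff_0)
      then have "lk (hcomp 0 (pdiff i f)) 0 = 0" by (simp add: lookup_hcomp)
      then show ?thesis using homog_0_const[OF homog_hcomp, of "pdiff i f"] by (simp add: C_zero)
    qed
    then have "hcomp 0 (\<Sum>i\<in>UNIV. a i * pdiff i f) = 0"
      by (simp add: hcomp_sum hcomp_mult)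
    moreover have "hcomp 0 (1 :: ('v, 'a) mpoly) = 1" using hcomp_C[of 0 1] by (simp add: C_one)
    ultimately show False using J by simp
  qed
  have partA: "(d \<le> 3 \<or> ?f0 = 0) \<longrightarrow> (\<exists>g. g dvd f \<and> total_deg g = 1)"
  proof
    assume "d \<le> 3 \<or> ?f0 = 0"
    then show "\<exists>g. g dvd f \<and> total_deg g = 1"
    proof
      assume "d \<le> 3"
      then have "total_deg g = 1 \<or> total_deg h = 1" using tf tfd tg th by linarith
      then show ?thesis using fgh by (metis dvd_triv_left dvd_triv_right)
    next
      assume f00: "?f0 = 0"
      have vk: "\<forall>k<d. k \<noteq> 1 \<longrightarrow> hcomp k f = 0"
      proof (intro allI impI)
        fix k assume "k < d" "k \<noteq> 1"
        then show "hcomp k f = 0" using f00 van[of k] by (cases "k = 0") auto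
      qed
      have "hcomp 0 g * hcomp 0 h = 0" using f00 by (simp add: fgh hcomp_mult)
      then have "hcomp 0 g = 0 \<or> hcomp 0 h = 0" using mpoly_no_zd by blast
      then have "?f1 dvd f"
      proof
        assume "hcomp 0 h = 0"
        then have "?f1 dvd h" using linear_factor[OF fgh _ f1ne _ vk] tf tfd tg by simp
        then show ?thesis using fgh by simp
      next
        assume "hcomp 0 g = 0"
        then have "?f1 dvd g" using linear_factor[OF fgh[unfolded mult.commute[of g]] _ f1ne _ vk] tf tfd th by simp
        then show ?thesis using fgh by simp
      qed
      moreover have "total_deg ?f1 = 1" by (rule total_deg_homog[OF homog_hcomp f1ne])
      ultimately show ?thesis by blast
    qed
  qed
  have partB: "hcomp 0 f = 0 \<and> hcomp 1 f dvd f \<and> (hcomp 1 f)^2 dvd hcomp d f"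
    if LF: "L dvd f" and tL: "total_deg L = 1" for L
  proof -
    define c0 where "c0 = lk L 0"
    define l where "l = hcomp 1 L"
    have hl: "homog 1 l" unfolding l_def by (rule homog_hcomp)
    have "L = (\<Sum>k\<le>1. hcomp k L)" using decomp[of L 1] tL by simp
    moreover have "hcomp 0 L = C c0"
      using homog_0_const[OF homog_hcomp, of L] by (simp add: lookup_hcomp c0_def)
    ultimately have Leq: "L = C c0 + l" by (simp add: l_def)
    have l0: "l \<noteq> 0"
    proof
      assume "l = 0"
      then have "L = C c0" using Leq by simp
      then have "total_deg L = 0" by (simp add: total_deg_C)
      then show False using tL by simp
    qed
    obtain \<sigma> where r: "rhom \<sigma>" and sC: "\<And>a. \<sigma> (C a) = C a" and sL: "\<sigma> L = 0"
      and sd: "\<And>p. L dvd p - \<sigma> p"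
      using subst_exists[OF hl l0 Leq] by blast
    obtain q where fLq: "f = L * q" using LF by (auto simp: dvd_def)
    have pdf: "pdiff i f = pdiff i L * q + L * pdiff i q" for i
      by (simp add: fLq pdiff_mult)
    have "1 = \<sigma> (\<Sum>i\<in>UNIV. a i * pdiff i f)" using J rhom.hone[OF r] by simp
    also have "\<dots> = (\<Sum>i\<in>UNIV. \<sigma> (a i) * (\<sigma> (pdiff i L) * \<sigma> q))"
      using r by (simp add: rhom.hsum rhom.hmult rhom.hadd pdf sL)
    also have "\<dots> = (\<Sum>i\<in>UNIV. \<sigma> (a i) * \<sigma> (pdiff i L)) * \<sigma> q"
      by (simp add: sum_distrib_right mult.assoc)
    finally have "(\<Sum>i\<in>UNIV. \<sigma> (a i) * \<sigma> (pdiff i L)) * \<sigma> q = 1" by simp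
    then have "\<sigma> q * (\<Sum>i\<in>UNIV. \<sigma> (a i) * \<sigma> (pdiff i L)) = 1" by (simp add: mult.commute)
    from unit_const[OF this] obtain \<kappa> where kap: "\<sigma> q = C \<kappa>" "\<kappa> \<noteq> 0" by blast
    obtain r0 where "q - \<sigma> q = L * r0" using sd[of q] by (auto simp: dvd_def)
    then have qeq: "q = C \<kappa> + L * r0" using kap by (simp add: algebra_simps)
    have kinv: "C \<kappa> * C (1 / \<kappa>) = 1" using kap by (simp add: C_mult[symmetric] C_one)
    show ?thesis
    proof (cases "c0 = 0")
      case True
      then have Ll: "L = l" using Leq by (simp add: C_zero)
      have feq: "f = l * (C \<kappa> + l * r0)" using fLq qeq Ll by simp
      have A: "hcomp 0 f = 0" unfolding feq by (simp add: hcomp_mult_homog[OF hl])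
      have B: "hcomp 1 f = l * C \<kappa>" unfolding feq
        by (simp add: hcomp_mult_homog[OF hl] hcomp_add hcomp_C)
      have kinv': "x * C \<kappa> * C (1 / \<kappa>) = x" for x
        by (simp add: mult.assoc kinv)
      have "f = (l * C \<kappa>) * (C (1 / \<kappa>) * (C \<kappa> + l * r0))"
        unfolding feq by (simp only: mult.assoc[symmetric] kinv')
      then have Bd: "hcomp 1 f dvd f" unfolding B by (rule dvdI)
      have d1: "1 \<le> d - 1" "d - 1 \<noteq> 0" "d - 1 - 1 = d - 2" using d2 by auto
      have "hcomp d f = l * hcomp (d - 1) (C \<kappa> + l * r0)" unfolding feq using d2
        by (simp add: hcomp_mult_homog[OF hl])
      also have "hcomp (d - 1) (C \<kappa> + l * r0) = l * hcomp (d - 2) r0"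
        using d1 by (simp add: hcomp_add hcomp_C hcomp_mult_homog[OF hl])
      also have "l * (l * hcomp (d - 2) r0) = (C \<kappa> * C (1 / \<kappa>))^2 * (l * (l * hcomp (d - 2) r0))"
        by (simp add: kinv)
      also have "\<dots> = (l * C \<kappa>)^2 * (C (1 / \<kappa>) ^ 2 * hcomp (d - 2) r0)"
        by (simp add: power2_eq_square ac_simps)
      finally have Cd: "(hcomp 1 f)^2 dvd hcomp d f" unfolding B by (rule dvdI)
      show ?thesis using A Bd Cd by blast
    next
      case c0: False
      define f0c where "f0c = lk f 0"
      have hf0: "?f0 = C f0c"
        using homog_0_const[OF homog_hcomp[of 0 f]] by (simp add: lookup_hcomp f0c_def)
      have sl: "\<sigma> l = - C c0"
        using sL r by (simp add: Leq rhom.hadd sC add_eq_0_iff)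
      have eE: "euler f = ?f1 + C (of_nat d) * ?fd"
      proof -
        have "euler f = euler ?f0 + euler ?f1 + euler ?fd"
          by (subst fsplit) (simp add: euler_add)
        also have "\<dots> = ?f1 + C (of_nat d) * ?fd"
          by (simp add: euler_homog[OF homog_hcomp] C_zero C_one)
        finally show ?thesis .
      qed
      have eL: "euler L = l"
        by (simp add: Leq euler_add euler_homog[OF homog_C] euler_homog[OF hl] C_zero C_one)
      have "\<sigma> (euler f) = \<sigma> l * \<sigma> q"
        using r by (simp add: fLq euler_mult eL rhom.hadd rhom.hmult sL)
      then have ii: "\<sigma> ?f1 + C (of_nat d) * \<sigma> ?fd = - (C c0 * C \<kappa>)"
        using r by (simp add: eE rhom.hadd rhom.hmult sC sl kap)
      have "\<sigma> f = 0" using r by (simp add: fLq rhom.hmult sL)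
      then have "\<sigma> ?f0 + \<sigma> ?f1 + \<sigma> ?fd = 0" using r fsplit by (metis rhom.hadd)
      then have i: "\<sigma> ?fd = - C f0c - \<sigma> ?f1" by (simp add: hf0 sC algebra_simps add_eq_0_iff)
      define s where "s = (of_nat d * f0c - c0 * \<kappa>) / (1 - of_nat d)"
      have dne: "(1 :: 'a) - of_nat d \<noteq> 0"
      proof
        assume "(1 :: 'a) - of_nat d = 0"
        then have "(of_nat d :: 'a) = of_nat 1" by simp
        then have "d = 1" by (simp only: of_nat_eq_iff)
        then show False using d2 by simp
      qed
      have "C (1 - of_nat d) * \<sigma> ?f1 - C (of_nat d * f0c - c0 * \<kappa>)
          = (\<sigma> ?f1 + C (of_nat d) * (- C f0c - \<sigma> ?f1)) - (- (C c0 * C \<kappa>))"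
        by (simp add: C_diff C_mult C_one algebra_simps)
      also have "\<dots> = 0" using ii i by simp
      finally have "C (1 - of_nat d) * \<sigma> ?f1 = C (of_nat d * f0c - c0 * \<kappa>)" by simp
      then have sf1: "\<sigma> ?f1 = C s" unfolding s_def using dne by (rule const_solve)
      define t where "t = - f0c - s"
      have sfd: "\<sigma> ?fd = C t" using i sf1 by (simp add: t_def C_diff C_minus)
      have Cs: "C (s / c0) * L = C s + C (s / c0) * l"
        using c0 by (simp add: Leq distrib_left C_mult[symmetric])
      have e1: "?f1 + C (s / c0) * l = (?f1 - \<sigma> ?f1) + C (s / c0) * L"
        by (simp add: Cs sf1 sf1[unfolded One_nat_def])
      have "L dvd (?f1 - \<sigma> ?f1) + C (s / c0) * L" by (rule dvd_add[OF sd]) simp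
      then have "L dvd ?f1 + C (s / c0) * l" by (simp only: e1)
      then obtain R1 where "?f1 + C (s / c0) * l = L * R1" by (auto simp: dvd_def)
      moreover have "homog 1 (?f1 + C (s / c0) * l)"
        using homog_add[OF homog_hcomp homog_mult[OF homog_C hl]] by simp
      ultimately have "?f1 + C (s / c0) * l = 0" using lemma_Z[OF hl l0 c0 Leq] by blast
      then have f1eq: "?f1 = - (C (s / c0) * l)" by (simp add: add_eq_0_iff)
      define u where "u = C (- 1 / c0) * l"
      have hu: "homog 1 u" unfolding u_def using homog_mult[OF homog_C hl] by simp
      have u0: "u \<noteq> 0" unfolding u_def using l0 c0 mpoly_no_zd[of "C (- 1 / c0)" l] by simp
      have "u - 1 = C (- 1 / c0) * L"
        using c0 by (simp add: u_def Leq distrib_left C_mult[symmetric] C_minus C_one)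
      then have "L dvd u - 1" by simp
      then have Lud: "L dvd u ^ d - 1" using dvd_power_diff_gen[of L u 1 d] by simp
      have e2: "?fd - C t * u ^ d = (?fd - \<sigma> ?fd) - C t * (u ^ d - 1)"
        by (simp add: sfd algebra_simps)
      have "L dvd (?fd - \<sigma> ?fd) - C t * (u ^ d - 1)" by (rule dvd_diff[OF sd dvd_mult[OF Lud]])
      then have "L dvd ?fd - C t * u ^ d" by (simp only: e2)
      then obtain R2 where "?fd - C t * u ^ d = L * R2" by (auto simp: dvd_def)
      moreover have "homog d (?fd - C t * u ^ d)"
        using homog_diff[OF homog_hcomp homog_mult[OF homog_C homog_power[OF hu]]] by simp
      ultimately have "?fd - C t * u ^ d = 0" using lemma_Z[OF hl l0 c0 Leq] by blast
      then have fdeq: "?fd = C t * u ^ d" by simp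
      have lu: "l = C (- c0) * u"
        using c0 by (simp add: u_def mult.assoc[symmetric] C_mult[symmetric] C_one)
      have f1u: "?f1 = C s * u"
      proof -
        have "C (s / c0) * l = C (s / c0) * C (- c0) * u" by (simp add: lu mult.assoc)
        also have "\<dots> = C (- s) * u" using c0 by (simp add: C_mult[symmetric])
        finally have e3: "C (s / c0) * l = C (- s) * u" .
        show ?thesis unfolding f1eq e3 by (simp add: C_minus)
      qed
      have fu: "f = C f0c + C s * u + C t * u ^ d"
        using fsplit hf0 f1u fdeq by simp
      obtain d' where d': "d = Suc d'" using d2 by (cases d) auto
      define W where "W = C s + C t * C (of_nat d) * u ^ d'"
      have pu: "pdiff i (u ^ d) = C (of_nat d) * u ^ d' * pdiff i u" for i
        unfolding d' by (rule pdiff_power)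
      have "pdiff i f = W * pdiff i u" for i
        by (simp add: fu pdiff_add pdiff_C_mult pu) (simp add: W_def algebra_simps)
      then have "1 = W * (\<Sum>i\<in>UNIV. a i * pdiff i u)"
        using J by (simp add: sum_distrib_left ac_simps)
      then have "W * (\<Sum>i\<in>UNIV. a i * pdiff i u) = 1" by simp
      from unit_const(1)[OF this] have "hcomp d' W = 0"
        using d' d2 by (metis hcomp_C One_nat_def Suc_1 Suc_le_mono not_one_le_zero)
      moreover have "hcomp d' W = C (t * of_nat d) * u ^ d'"
      proof -
        have "homog d' (C (t * of_nat d) * u ^ d')"
          using homog_mult[OF homog_C homog_power[OF hu]] by simp
        then show ?thesis
          using d' d2 by (simp add: W_def hcomp_add hcomp_C C_mult hcomp_homog)
      qed
      ultimately have "C (t * of_nat d) * u ^ d' = 0" by simp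
      then have "t * of_nat d = 0" using mpoly_power_ne0[OF u0] mpoly_no_zd by (metis C_eq_0_iff)
      then have "t = 0" using d2 by simp
      then have "?fd = 0" using fdeq by (simp add: C_zero)
      then show ?thesis using fd0 by simp
    qed
  qed
  show ?thesis using partA partB by blast
qed


end
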